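(* Let $(H,\alpha)$ be a monoidal Hom-bialgebra, let $(A,\beta)$ be a left $(H,\alpha)$-Hom-comodule coalgebra with coaction $a\mapsto a_{(-1)}\otimes a_{(0)}$, and let $m\in\mathbb{Z}$. On $A\rtimes H:=A\otimes H$ define $$\varepsilon_{A\rtimes H}(a\rtimes h)=\varepsilon(a)\varepsilon(h),\qquad \Delta_{A\rtimes H}(a\rtimes h)=a_{1}\rtimes\alpha^{m}(a_{2(-1)})\alpha^{-1}(h_{1})\otimes\beta(a_{2(0)})\rtimes h_{2}.$$ Then $(A\rtimes H,\beta\otimes\alpha)$ with $\Delta_{A\rtimes H}$ and $\varepsilon_{A\rtimes H}$ is a monoidal Hom-coalgebra.
   Context: All vector spaces are over a field $k$; Sweedler notation $\Delta(c)=c_1\otimes c_2$. A monoidal Hom-algebra $(A,\beta)$: multiplication, unit $1_A$, linear automorphism $\beta$ with $\beta(a)(bc)=(ab)\beta(c)$, $\beta(ab)=\beta(a)\beta(b)$, $a1_A=1_Aa=\beta(a)$, $\beta(1_A)=1_A$. A monoidal Hom-coalgebra $(C,\gamma)$: $\Delta$, $\varepsilon$, linear automorphism $\gamma$ with $\gamma^{-1}(c_1)\otimes\Delta(c_2)=\Delta(c_1)\otimes\gamma^{-1}(c_2)$, $\Delta(\gamma(c))=\gamma(c_1)\otimes\gamma(c_2)$, $c_1\varepsilon(c_2)=\gamma^{-1}(c)=\varepsilon(c_1)c_2$, $\varepsilon\circ\gamma=\varepsilon$. A monoidal Hom-bialgebra $(H,\alpha)$ is both (with the same $\alpha$) with $\Delta,\varepsilon$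 multiplicative and unital. A left $(H,\alpha)$-Hom-comodule is $(M,\mu)$, $\mu$ a linear automorphism, with $\rho(x)=x_{(-1)}\otimes x_{(0)}$ satisfying $\Delta_H(x_{(-1)})\otimes\mu^{-1}(x_{(0)})=\alpha^{-1}(x_{(-1)})\otimes x_{(0)(-1)}\otimes x_{(0)(0)}$, $\rho(\mu(x))=\alpha(x_{(-1)})\otimes\mu(x_{(0)})$, $\varepsilon_H(x_{(-1)})x_{(0)}=\mu^{-1}(x)$. A left $(H,\alpha)$-Hom-comodule coalgebra is a monoidal Hom-coalgebra $(A,\beta)$ which is a left $(H,\alpha)$-Hom-comodule such that $b_{(-1)}\otimes b_{(0)1}\otimes b_{(0)2}=b_{1(-1)}b_{2(-1)}\otimes b_{1(0)}\otimes b_{2(0)}$ and $\varepsilon(b_{(0)})b_{(-1)}=\varepsilon(b)1_H$. *)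

theory Defs
  imports "HOL-Library.Poly_Mapping"
begin

text \<open>Vector spaces over a field 'k are modelled via a chosen basis: a space with
basis indexed by the type 'a is the space of finitely supported functions 'a =>0 'k.
The tensor product of spaces with bases 'a and 'b is the space with basis 'a * 'b.\<close>

definition pm_scale :: "'k::field \<Rightarrow> ('a \<Rightarrow>\<^sub>0 'k) \<Rightarrow> ('a \<Rightarrow>\<^sub>0 'k)" where
  "pm_scale c v = Poly_Mapping.map (\<lambda>x. c * x) v"

definition bv :: "'a \<Rightarrow> ('a \<Rightarrow>\<^sub>0 'k::field)" where
  "bv x = Poly_Mapping.single x 1"

definition lin :: "('a \<Rightarrow> ('b \<Rightarrow>\<^sub>0 'k::field)) \<Rightarrow> ('a \<Rightarrow>\<^sub>0 'k) \<Rightarrow> ('b \<Rightarrow>\<^sub>0 'k)" where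
  "lin f v = (\<Sum>x\<in>Poly_Mapping.keys v. pm_scale (Poly_Mapping.lookup v x) (f x))"

definition is_linear :: "(('a \<Rightarrow>\<^sub>0 'k::field) \<Rightarrow> ('b \<Rightarrow>\<^sub>0 'k)) \<Rightarrow> bool" where
  "is_linear f \<longleftrightarrow> (\<forall>u v. f (u + v) = f u + f v) \<and> (\<forall>c u. f (pm_scale c u) = pm_scale c (f u))"

definition is_linfun :: "(('a \<Rightarrow>\<^sub>0 'k::field) \<Rightarrow> 'k) \<Rightarrow> bool" where
  "is_linfun f \<longleftrightarrow> (\<forall>u v. f (u + v) = f u + f v) \<and> (\<forall>c u. f (pm_scale c u) = c * f u)"

definition lin_auto :: "(('a \<Rightarrow>\<^sub>0 'k::field) \<Rightarrow> ('a \<Rightarrow>\<^sub>0 'k)) \<Rightarrow> bool" where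
  "lin_auto f \<longleftrightarrow> is_linear f \<and> bij f"

definition hpow :: "(('a \<Rightarrow>\<^sub>0 'k::field) \<Rightarrow> ('a \<Rightarrow>\<^sub>0 'k)) \<Rightarrow> int \<Rightarrow> ('a \<Rightarrow>\<^sub>0 'k) \<Rightarrow> ('a \<Rightarrow>\<^sub>0 'k)" where
  "hpow f m = (if 0 \<le> m then f ^^ nat m else inv f ^^ nat (- m))"

definition tensor :: "('a \<Rightarrow>\<^sub>0 'k::field) \<Rightarrow> ('b \<Rightarrow>\<^sub>0 'k) \<Rightarrow> ('a \<times> 'b \<Rightarrow>\<^sub>0 'k)" where
  "tensor v w = lin (\<lambda>x. lin (\<lambda>y. bv (x, y)) w) v"

definition tmap :: "(('a \<Rightarrow>\<^sub>0 'k::field) \<Rightarrow> ('c \<Rightarrow>\<^sub>0 'k)) \<Rightarrow> (('b \<Rightarrow>\<^sub>0 'k) \<Rightarrow> ('d \<Rightarrow>\<^sub>0 'k))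
    \<Rightarrow> ('a \<times> 'b \<Rightarrow>\<^sub>0 'k) \<Rightarrow> ('c \<times> 'd \<Rightarrow>\<^sub>0 'k)" where
  "tmap f g = lin (\<lambda>(x, y). tensor (f (bv x)) (g (bv y)))"

definition assocl :: "('a \<times> ('b \<times> 'c) \<Rightarrow>\<^sub>0 'k::field) \<Rightarrow> (('a \<times> 'b) \<times> 'c \<Rightarrow>\<^sub>0 'k)" where
  "assocl = lin (\<lambda>(x, (y, z)). bv ((x, y), z))"

definition assocr :: "(('a \<times> 'b) \<times> 'c \<Rightarrow>\<^sub>0 'k::field) \<Rightarrow> ('a \<times> ('b \<times> 'c) \<Rightarrow>\<^sub>0 'k)" where
  "assocr = lin (\<lambda>((x, y), z). bv (x, (y, z)))"

definition midswap :: "(('a \<times> 'b) \<times> ('c \<times> 'd) \<Rightarrow>\<^sub>0 'k::field) \<Rightarrow> (('a \<times> 'c) \<times> ('b \<times> 'd) \<Rightarrow>\<^sub>0 'k)" where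
  "midswap = lin (\<lambda>((a, b), (c, d)). bv ((a, c), (b, d)))"

definition epsl :: "(('a \<Rightarrow>\<^sub>0 'k::field) \<Rightarrow> 'k) \<Rightarrow> ('a \<times> 'b \<Rightarrow>\<^sub>0 'k) \<Rightarrow> ('b \<Rightarrow>\<^sub>0 'k)" where
  "epsl e = lin (\<lambda>(x, y). pm_scale (e (bv x)) (bv y))"

definition epsr :: "(('b \<Rightarrow>\<^sub>0 'k::field) \<Rightarrow> 'k) \<Rightarrow> ('a \<times> 'b \<Rightarrow>\<^sub>0 'k) \<Rightarrow> ('a \<Rightarrow>\<^sub>0 'k)" where
  "epsr e = lin (\<lambda>(x, y). pm_scale (e (bv y)) (bv x))"

definition hom_algebra ::
  "(('a \<times> 'a \<Rightarrow>\<^sub>0 'k::field) \<Rightarrow> ('a \<Rightarrow>\<^sub>0 'k)) \<Rightarrow> ('a \<Rightarrow>\<^sub>0 'k)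
   \<Rightarrow> (('a \<Rightarrow>\<^sub>0 'k) \<Rightarrow> ('a \<Rightarrow>\<^sub>0 'k)) \<Rightarrow> bool" where
  "hom_algebra mu u beta \<longleftrightarrow>
     is_linear mu \<and> lin_auto beta \<and>
     (\<forall>a b c. mu (tensor (beta a) (mu (tensor b c))) = mu (tensor (mu (tensor a b)) (beta c))) \<and>
     (\<forall>a b. beta (mu (tensor a b)) = mu (tensor (beta a) (beta b))) \<and>
     (\<forall>a. mu (tensor a u) = beta a \<and> mu (tensor u a) = beta a) \<and>
     beta u = u"

definition hom_coalgebra ::
  "(('a \<Rightarrow>\<^sub>0 'k::field) \<Rightarrow> ('a \<times> 'a \<Rightarrow>\<^sub>0 'k)) \<Rightarrow> (('a \<Rightarrow>\<^sub>0 'k) \<Rightarrow> 'k)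
   \<Rightarrow> (('a \<Rightarrow>\<^sub>0 'k) \<Rightarrow> ('a \<Rightarrow>\<^sub>0 'k)) \<Rightarrow> bool" where
  "hom_coalgebra delta eps gamma \<longleftrightarrow>
     is_linear delta \<and> is_linfun eps \<and> lin_auto gamma \<and>
     (\<forall>c. tmap (inv gamma) delta (delta c) = assocr (tmap delta (inv gamma) (delta c))) \<and>
     (\<forall>c. delta (gamma c) = tmap gamma gamma (delta c)) \<and>
     (\<forall>c. epsr eps (delta c) = inv gamma c \<and> epsl eps (delta c) = inv gamma c) \<and>
     (\<forall>c. eps (gamma c) = eps c)"

definition hom_bialgebra ::
  "(('h \<times> 'h \<Rightarrow>\<^sub>0 'k::field) \<Rightarrow> ('h \<Rightarrow>\<^sub>0 'k)) \<Rightarrow> ('h \<Rightarrow>\<^sub>0 'k)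
   \<Rightarrow> (('h \<Rightarrow>\<^sub>0 'k) \<Rightarrow> ('h \<times> 'h \<Rightarrow>\<^sub>0 'k)) \<Rightarrow> (('h \<Rightarrow>\<^sub>0 'k) \<Rightarrow> 'k)
   \<Rightarrow> (('h \<Rightarrow>\<^sub>0 'k) \<Rightarrow> ('h \<Rightarrow>\<^sub>0 'k)) \<Rightarrow> bool" where
  "hom_bialgebra mu u delta eps alpha \<longleftrightarrow>
     hom_algebra mu u alpha \<and> hom_coalgebra delta eps alpha \<and>
     (\<forall>g h. delta (mu (tensor g h)) = tmap mu mu (midswap (tensor (delta g) (delta h)))) \<and>
     delta u = tensor u u \<and>
     (\<forall>g h. eps (mu (tensor g h)) = eps g * eps h) \<and>
     eps u = 1"

definition hom_comodule ::
  "(('h \<Rightarrow>\<^sub>0 'k::field) \<Rightarrow> ('h \<times> 'h \<Rightarrow>\<^sub>0 'k)) \<Rightarrow> (('h \<Rightarrow>\<^sub>0 'k) \<Rightarrow> 'k)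
   \<Rightarrow> (('h \<Rightarrow>\<^sub>0 'k) \<Rightarrow> ('h \<Rightarrow>\<^sub>0 'k))
   \<Rightarrow> (('m \<Rightarrow>\<^sub>0 'k) \<Rightarrow> ('h \<times> 'm \<Rightarrow>\<^sub>0 'k)) \<Rightarrow> (('m \<Rightarrow>\<^sub>0 'k) \<Rightarrow> ('m \<Rightarrow>\<^sub>0 'k)) \<Rightarrow> bool" where
  "hom_comodule deltaH epsH alpha rho nu \<longleftrightarrow>
     is_linear rho \<and> lin_auto nu \<and>
     (\<forall>x. tmap deltaH (inv nu) (rho x) = assocl (tmap (inv alpha) rho (rho x))) \<and>
     (\<forall>x. rho (nu x) = tmap alpha nu (rho x)) \<and>
     (\<forall>x. epsl epsH (rho x) = inv nu x)"

definition hom_comodule_coalgebra ::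
  "(('h \<times> 'h \<Rightarrow>\<^sub>0 'k::field) \<Rightarrow> ('h \<Rightarrow>\<^sub>0 'k)) \<Rightarrow> ('h \<Rightarrow>\<^sub>0 'k)
   \<Rightarrow> (('h \<Rightarrow>\<^sub>0 'k) \<Rightarrow> ('h \<times> 'h \<Rightarrow>\<^sub>0 'k)) \<Rightarrow> (('h \<Rightarrow>\<^sub>0 'k) \<Rightarrow> 'k)
   \<Rightarrow> (('h \<Rightarrow>\<^sub>0 'k) \<Rightarrow> ('h \<Rightarrow>\<^sub>0 'k))
   \<Rightarrow> (('a \<Rightarrow>\<^sub>0 'k) \<Rightarrow> ('a \<times> 'a \<Rightarrow>\<^sub>0 'k)) \<Rightarrow> (('a \<Rightarrow>\<^sub>0 'k) \<Rightarrow> 'k)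
   \<Rightarrow> (('a \<Rightarrow>\<^sub>0 'k) \<Rightarrow> ('a \<Rightarrow>\<^sub>0 'k)) \<Rightarrow> (('a \<Rightarrow>\<^sub>0 'k) \<Rightarrow> ('h \<times> 'a \<Rightarrow>\<^sub>0 'k)) \<Rightarrow> bool" where
  "hom_comodule_coalgebra muH uH deltaH epsH alpha deltaA epsA beta rho \<longleftrightarrow>
     hom_coalgebra deltaA epsA beta \<and>
     hom_comodule deltaH epsH alpha rho beta \<and>
     (\<forall>b. tmap id deltaA (rho b) = tmap muH id (midswap (tmap rho rho (deltaA b)))) \<and>
     (\<forall>b. epsr epsA (rho b) = pm_scale (epsA b) uH)"

text \<open>Comultiplication and counit on A >< H = A (x) H:
  Delta(a >< h) = a1 >< alpha^m(a2(-1)) alpha^-1(h1) (x) beta(a2(0)) >< h2.\<close>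
definition smash_comult ::
  "(('h \<times> 'h \<Rightarrow>\<^sub>0 'k::field) \<Rightarrow> ('h \<Rightarrow>\<^sub>0 'k)) \<Rightarrow> (('h \<Rightarrow>\<^sub>0 'k) \<Rightarrow> ('h \<times> 'h \<Rightarrow>\<^sub>0 'k))
   \<Rightarrow> (('h \<Rightarrow>\<^sub>0 'k) \<Rightarrow> ('h \<Rightarrow>\<^sub>0 'k))
   \<Rightarrow> (('a \<Rightarrow>\<^sub>0 'k) \<Rightarrow> ('a \<times> 'a \<Rightarrow>\<^sub>0 'k)) \<Rightarrow> (('a \<Rightarrow>\<^sub>0 'k) \<Rightarrow> ('a \<Rightarrow>\<^sub>0 'k))
   \<Rightarrow> (('a \<Rightarrow>\<^sub>0 'k) \<Rightarrow> ('h \<times> 'a \<Rightarrow>\<^sub>0 'k)) \<Rightarrow> int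
   \<Rightarrow> ('a \<times> 'h \<Rightarrow>\<^sub>0 'k) \<Rightarrow> (('a \<times> 'h) \<times> ('a \<times> 'h) \<Rightarrow>\<^sub>0 'k)" where
  "smash_comult muH deltaH alpha deltaA beta rho m =
     lin (\<lambda>(x, y).
       tmap (tmap id (\<lambda>v. muH (tmap (hpow alpha m) (inv alpha) v))) (tmap beta id)
         (lin (\<lambda>((a1, (c, a0)), (h1, h2)). bv ((a1, (c, h1)), (a0, h2)))
           (tmap (tmap id rho) id (tensor (deltaA (bv x)) (deltaH (bv y))))))"

definition smash_counit ::
  "(('h \<Rightarrow>\<^sub>0 'k::field) \<Rightarrow> 'k) \<Rightarrow> (('a \<Rightarrow>\<^sub>0 'k) \<Rightarrow> 'k) \<Rightarrow> ('a \<times> 'h \<Rightarrow>\<^sub>0 'k) \<Rightarrow> 'k" where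
  "smash_counit epsH epsA v = (\<Sum>p\<in>Poly_Mapping.keys v. Poly_Mapping.lookup v p * (epsA (bv (fst p)) * epsH (bv (snd p))))"

end

theory Submission
  imports Defs
begin


lemma lookup_pm_scale [simp]: "Poly_Mapping.lookup (pm_scale c v) k = c * Poly_Mapping.lookup v k"
  unfolding pm_scale_def by (simp add: Poly_Mapping.map.rep_eq when_def)

lemma pm_eqI: "(\<And>k. Poly_Mapping.lookup u k = Poly_Mapping.lookup v k) \<Longrightarrow> u = v"
  by (simp add: poly_mapping_eqI)

lemma pm_scale_add: "pm_scale c (u + v) = pm_scale c u + pm_scale c v"
  by (rule pm_eqI) (simp add: lookup_add algebra_simps)
lemma pm_scale_add2: "pm_scale (c + d) u = pm_scale c u + pm_scale d u"
  by (rule pm_eqI) (simp add: lookup_add algebra_simps)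
lemma pm_scale_scale [simp]: "pm_scale c (pm_scale d u) = pm_scale (c * d) u"
  by (rule pm_eqI) (simp add: algebra_simps)
lemma pm_scale_one [simp]: "pm_scale 1 u = u"
  by (rule pm_eqI) simp
lemma pm_scale_zero [simp]: "pm_scale 0 u = 0"
  by (rule pm_eqI) simp
lemma pm_scale_zero2 [simp]: "pm_scale c 0 = 0"
  by (rule pm_eqI) simp
lemma pm_scale_sum: "pm_scale c (sum f A) = sum (\<lambda>x. pm_scale c (f x)) A"
  by (induction A rule: infinite_finite_induct) (auto simp: pm_scale_add)

lemma lin_superset:
  assumes "finite S" "Poly_Mapping.keys v \<subseteq> S"
  shows "lin f v = (\<Sum>x\<in>S. pm_scale (Poly_Mapping.lookup v x) (f x))"
  unfolding lin_def
  by (rule sum.mono_neutral_left) (use assms in \<open>auto simp: in_keys_iff\<close>)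

lemma lin_add: "lin f (u + v) = lin f u + lin f v"
proof -
  let ?S = "Poly_Mapping.keys u \<union> Poly_Mapping.keys v"
  have "lin f (u + v) = (\<Sum>x\<in>?S. pm_scale (Poly_Mapping.lookup (u+v) x) (f x))"
    by (rule lin_superset) (use Poly_Mapping.keys_add[of u v] in auto)
  also have "\<dots> = (\<Sum>x\<in>?S. pm_scale (Poly_Mapping.lookup u x) (f x)) + (\<Sum>x\<in>?S. pm_scale (Poly_Mapping.lookup v x) (f x))"
    by (simp add: lookup_add pm_scale_add2 sum.distrib)
  also have "\<dots> = lin f u + lin f v"
    by (subst (1 2) lin_superset[of ?S]) auto
  finally show ?thesis .
qed

lemma lin_scale: "lin f (pm_scale c u) = pm_scale c (lin f u)"
proof -
  have "lin f (pm_scale c u) = (\<Sum>x\<in>Poly_Mapping.keys u. pm_scale (Poly_Mapping.lookup (pm_scale c u) x) (f x))"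
    by (rule lin_superset) (auto simp: in_keys_iff)
  thus ?thesis by (simp add: lin_def pm_scale_sum)
qed

lemma lin_zero [simp]: "lin f 0 = 0"
  by (simp add: lin_def)

lemma lin_bv [simp]: "lin f (bv x) = f x"
  by (simp add: lin_def bv_def)

lemma is_linear_lin [simp]: "is_linear (lin f)"
  by (simp add: is_linear_def lin_add lin_scale)

lemma linear_add: "is_linear F \<Longrightarrow> F (u + v) = F u + F v"
  by (simp add: is_linear_def)
lemma linear_scale: "is_linear F \<Longrightarrow> F (pm_scale c u) = pm_scale c (F u)"
  by (simp add: is_linear_def)
lemma linear_zero: "is_linear F \<Longrightarrow> F 0 = 0"
  using linear_scale[of F 0 0] by simp
lemma linear_sum: "is_linear F \<Longrightarrow> F (sum f A) = sum (\<lambda>x. F (f x)) A"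
  by (induction A rule: infinite_finite_induct) (auto simp: linear_add linear_zero)

lemma linear_lin: "is_linear F \<Longrightarrow> F (lin f v) = lin (\<lambda>x. F (f x)) v"
  by (simp add: lin_def linear_sum linear_scale)

lemma lin_lin: "lin g (lin f v) = lin (\<lambda>x. lin g (f x)) v"
  by (rule linear_lin) simp

lemma lin_bv_id [simp]: "lin bv v = v"
proof (rule pm_eqI)
  fix k
  have "Poly_Mapping.lookup (lin bv v) k = (\<Sum>x\<in>Poly_Mapping.keys v. Poly_Mapping.lookup v x * (if x = k then 1 else 0))"
    by (simp add: lin_def lookup_sum bv_def lookup_single when_def)
  also have "\<dots> = Poly_Mapping.lookup v k"
    by (simp add: if_distrib[of "\<lambda>t. _ * t"] sum.delta in_keys_iff cong: if_cong)
  finally show "Poly_Mapping.lookup (lin bv v) k = Poly_Mapping.lookup v k" .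
qed

lemma lin_bv_id' [simp]: "lin (\<lambda>x. bv x) v = v"
  using lin_bv_id by (simp add: eta_contract_eq)

lemma linear_expand: "is_linear F \<Longrightarrow> F v = lin (\<lambda>x. F (bv x)) v"
  using linear_lin[of F bv v] by simp

lemma linear_ext: "is_linear F \<Longrightarrow> is_linear G \<Longrightarrow> (\<And>x. F (bv x) = G (bv x)) \<Longrightarrow> F v = G v"
  by (subst linear_expand, assumption, subst (2) linear_expand, assumption) simp

lemma lin_cong: "(\<And>x. x \<in> Poly_Mapping.keys v \<Longrightarrow> f x = g x) \<Longrightarrow> lin f v = lin g v"
  by (simp add: lin_def)

lemma lin_fadd: "lin (\<lambda>x. f x + g x) v = lin f v + lin g v"
  by (simp add: lin_def pm_scale_add sum.distrib)

lemma lin_fscale: "lin (\<lambda>x. pm_scale c (f x)) v = pm_scale c (lin f v)"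
  by (simp add: lin_def pm_scale_sum mult.commute)

lemma lin_comm: "lin (\<lambda>x. lin (\<lambda>y. f x y) w) v = lin (\<lambda>y. lin (\<lambda>x. f x y) v) w"
  by (simp add: lin_def pm_scale_sum sum.swap[of _ "Poly_Mapping.keys v"] mult.commute)




lemma tensor_bv [simp]: "tensor (bv x) (bv y) = bv (x, y)"
  by (simp add: tensor_def)

lemma tensor_lin1 [simp]: "is_linear (\<lambda>u. tensor u w)"
  unfolding tensor_def by simp

lemma tensor_lin2 [simp]: "is_linear (\<lambda>w. tensor u w)"
  unfolding tensor_def is_linear_def by (simp add: lin_add lin_scale lin_fadd lin_fscale)

lemma tensor_lin2' [simp]: "is_linear (tensor u)"
  using tensor_lin2 by (simp add: eta_contract_eq)

lemma linear_id [simp]: "is_linear (\<lambda>x. x)"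
  by (simp add: is_linear_def)

lemma linear_comp: "is_linear F \<Longrightarrow> is_linear f \<Longrightarrow> is_linear (\<lambda>x. F (f x))"
  by (simp add: is_linear_def)

lemma linear_tensor1 [simp]: "is_linear f \<Longrightarrow> is_linear (\<lambda>x. tensor (f x) w)"
  using linear_comp[OF tensor_lin1] by blast
lemma linear_tensor2 [simp]: "is_linear f \<Longrightarrow> is_linear (\<lambda>x. tensor w (f x))"
  using linear_comp[OF tensor_lin2] by blast
lemma linear_lin1 [simp]: "is_linear f \<Longrightarrow> is_linear (\<lambda>x. lin g (f x))"
  using linear_comp[OF is_linear_lin] by blast
lemma linear_lin2 [simp]: "(\<And>p. is_linear (\<lambda>x. g x p)) \<Longrightarrow> is_linear (\<lambda>x. lin (g x) v)"
  unfolding is_linear_def lin_def by (simp add: pm_scale_add sum.distrib pm_scale_sum mult.commute)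
lemma pm_scale_lin [simp]: "is_linear (pm_scale c)"
  unfolding is_linear_def by (auto simp: pm_scale_add mult.commute)
lemma linear_scale1 [simp]: "is_linear f \<Longrightarrow> is_linear (\<lambda>x. pm_scale c (f x))"
  using linear_comp[OF pm_scale_lin] by blast

lemma linear_tensor_gen: "is_linear f \<Longrightarrow> is_linear g \<Longrightarrow> tensor (f u) (g w) = lin (\<lambda>(x,y). tensor (f (bv x)) (g (bv y))) (tensor u w)"
proof -
  assume f: "is_linear f" and g: "is_linear g"
  have "lin (\<lambda>(x,y). tensor (f (bv x)) (g (bv y))) (tensor u w) = lin (\<lambda>x. lin (\<lambda>y. tensor (f (bv x)) (g (bv y))) w) u"
    by (simp add: tensor_def lin_lin)
  also have "\<dots> = lin (\<lambda>x. tensor (f (bv x)) (g w)) u"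
    by (subst (2) linear_expand[OF g]) (simp add: linear_lin[OF tensor_lin2])
  also have "\<dots> = tensor (f u) (g w)"
    by (subst (2) linear_expand[OF f]) (simp add: linear_lin[OF tensor_lin1])
  finally show ?thesis by simp
qed

lemma tmap_lin [simp]: "is_linear (tmap f g)"
  by (simp add: tmap_def)

lemma tmap_tensor [simp]: "is_linear f \<Longrightarrow> is_linear g \<Longrightarrow> tmap f g (tensor u w) = tensor (f u) (g w)"
  unfolding tmap_def by (rule linear_tensor_gen[symmetric])

lemma tmap_bv [simp]: "tmap f g (bv (x, y)) = tensor (f (bv x)) (g (bv y))"
  by (simp add: tmap_def)

lemma linear_tmap [simp]: "is_linear h \<Longrightarrow> is_linear (\<lambda>x. tmap f g (h x))"
  using linear_comp[OF tmap_lin] by blast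

lemma tensor_ext:
  assumes "is_linear F" "is_linear G" "\<And>u w. F (tensor u w) = G (tensor u w)"
  shows "F v = G v"
proof (rule linear_ext[OF assms(1,2)])
  fix x :: "'a \<times> 'b"
  obtain p q where x: "x = (p, q)" by (cases x)
  show "F (bv x) = G (bv x)" unfolding x using assms(3)[of "bv p" "bv q"] by simp
qed

definition spl :: "('a \<times> 'b \<Rightarrow>\<^sub>0 'k::field) \<Rightarrow> (('a \<Rightarrow>\<^sub>0 'k) \<Rightarrow> ('b \<Rightarrow>\<^sub>0 'k) \<Rightarrow> ('c \<Rightarrow>\<^sub>0 'k)) \<Rightarrow> ('c \<Rightarrow>\<^sub>0 'k)" where
  "spl X K = lin (\<lambda>(p, q). K (bv p) (bv q)) X"

lemma spl_lin [simp]: "is_linear (\<lambda>X. spl X K)"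
  by (simp add: spl_def)

lemma linear_spl1 [simp]: "is_linear f \<Longrightarrow> is_linear (\<lambda>x. spl (f x) K)"
  using linear_comp[OF spl_lin] by blast

lemma linear_spl2 [simp]: "(\<And>a b. is_linear (\<lambda>x. K x a b)) \<Longrightarrow> is_linear (\<lambda>x. spl X (K x))"
  unfolding spl_def by (rule linear_lin2) (simp add: split_beta)

lemma spl_push: "is_linear F \<Longrightarrow> F (spl X K) = spl X (\<lambda>a b. F (K a b))"
  unfolding spl_def by (subst linear_lin) (auto simp: case_prod_unfold)

lemma spl_bv [simp]: "spl (bv (x, y)) K = K (bv x) (bv y)"
  by (simp add: spl_def)

lemma spl_tensor [simp]:
  assumes "\<And>w. is_linear (\<lambda>u. K u w)" "\<And>u. is_linear (\<lambda>w. K u w)"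
  shows "spl (tensor u w) K = K u w"
proof -
  have "spl (tensor u w) K = lin (\<lambda>x. lin (\<lambda>y. K (bv x) (bv y)) w) u"
    by (simp add: spl_def tensor_def lin_lin)
  also have "\<dots> = lin (\<lambda>x. K (bv x) w) u"
    using linear_expand[OF assms(2), symmetric] by simp
  also have "\<dots> = K u w"
    using linear_expand[OF assms(1), symmetric] by simp
  finally show ?thesis .
qed

lemma spl_spl: "spl (spl X K) L = spl X (\<lambda>a b. spl (K a b) L)"
  by (rule spl_push) simp

lemma spl_comm: "spl X (\<lambda>a b. spl Y (\<lambda>c d. K a b c d)) = spl Y (\<lambda>c d. spl X (\<lambda>a b. K a b c d))"
  unfolding spl_def split_beta by (rule lin_comm)

lemma tmap_spl: "tmap f g X = spl X (\<lambda>a b. tensor (f a) (g b))"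
  by (simp add: tmap_def spl_def split_beta)

lemma spl_tmap [simp]:
  assumes "is_linear f" "is_linear g" "\<And>w. is_linear (\<lambda>u. K u w)" "\<And>u. is_linear (\<lambda>w. K u w)"
  shows "spl (tmap f g X) K = spl X (\<lambda>a b. K (f a) (g b))"
  by (simp add: tmap_spl spl_spl assms linear_comp)

lemma spl_tensor_id [simp]: "spl X tensor = X"
proof -
  have "spl X tensor = lin (\<lambda>x. bv x) X"
    by (simp add: spl_def split_beta)
  thus ?thesis by simp
qed

lemma spl_tensor_id' [simp]: "spl X (\<lambda>a b. tensor a b) = X"
  using spl_tensor_id by (simp add: eta_contract_eq)

lemma tmap_id_id [simp]: "tmap (\<lambda>x. x) (\<lambda>x. x) X = X"
  by (simp add: tmap_spl)
lemma tmap_id_id' [simp]: "tmap id id X = X"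
  by (simp add: tmap_spl id_def)

lemma assocr_tensor [simp]: "assocr (tensor (tensor a b) c) = tensor a (tensor b c)"
proof -
  have "assocr (tensor (tensor a b) c) = lin (\<lambda>x. lin (\<lambda>y. lin (\<lambda>z. bv (x, y, z)) c) b) a"
    by (simp add: assocr_def tensor_def lin_lin)
  also have "\<dots> = tensor a (tensor b c)"
  proof -
    have "\<And>x. lin (\<lambda>y. lin (\<lambda>z. bv (x, y, z)) c) b = lin (\<lambda>z. lin (\<lambda>y. bv (x, y, z)) b) c"
      by (rule lin_comm)
    thus ?thesis by (simp add: tensor_def lin_lin)
  qed
  finally show ?thesis .
qed

lemma assocl_tensor [simp]: "assocl (tensor a (tensor b c)) = tensor (tensor a b) c"
proof -
  have "assocl (tensor a (tensor b c)) = lin (\<lambda>x. lin (\<lambda>y. lin (\<lambda>z. bv ((x, y), z)) c) b) a"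
    by (simp add: assocl_def tensor_def lin_lin)
  also have "\<dots> = tensor (tensor a b) c"
    by (simp add: tensor_def lin_lin)
  finally show ?thesis .
qed

lemma midswap_tensor [simp]: "midswap (tensor (tensor a b) (tensor c d)) = tensor (tensor a c) (tensor b d)"
proof -
  have "midswap (tensor (tensor a b) (tensor c d)) = lin (\<lambda>x. lin (\<lambda>y. lin (\<lambda>z. lin (\<lambda>w. bv ((x, z), (y, w))) d) c) b) a"
    by (simp add: midswap_def tensor_def lin_lin)
  also have "\<dots> = tensor (tensor a c) (tensor b d)"
    by (simp add: tensor_def lin_lin lin_comm[of _ c b])
  finally show ?thesis .
qed

lemma assocr_lin [simp]: "is_linear assocr" by (simp add: assocr_def)
lemma assocl_lin [simp]: "is_linear assocl" by (simp add: assocl_def)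
lemma midswap_lin [simp]: "is_linear midswap" by (simp add: midswap_def)

lemma spl_cong: "(\<And>a b. K a b = K' a b) \<Longrightarrow> spl X K = spl X K'"
proof -
  assume "\<And>a b. K a b = K' a b"
  hence "K = K'" by (intro ext)
  thus ?thesis by simp
qed

lemma assocr_tensor_gen: "assocr (tensor ab c) = spl ab (\<lambda>a b. tensor a (tensor b c))"
proof -
  have "assocr (tensor ab c) = assocr (tensor (spl ab tensor) c)" by simp
  also have "\<dots> = spl ab (\<lambda>a b. tensor a (tensor b c))"
    by (subst spl_push[where F = "\<lambda>z. tensor z c"], simp, subst spl_push, simp_all)
  finally show ?thesis .
qed

lemma assocr_spl: "assocr X = spl X (\<lambda>ab c. spl ab (\<lambda>a b. tensor a (tensor b c)))"
proof -
  have "assocr X = spl X (\<lambda>ab c. assocr (tensor ab c))"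
    unfolding spl_def assocr_def by (simp add: case_prod_unfold tensor_def)
  thus ?thesis by (simp add: assocr_tensor_gen)
qed

lemma assocl_tensor_gen: "assocl (tensor a bc) = spl bc (\<lambda>b c. tensor (tensor a b) c)"
proof -
  have "assocl (tensor a bc) = assocl (tensor a (spl bc tensor))" by simp
  also have "\<dots> = spl bc (\<lambda>b c. tensor (tensor a b) c)"
    by (subst spl_push[where F = "\<lambda>z. tensor a z"], simp, subst spl_push, simp_all)
  finally show ?thesis .
qed

lemma assocl_spl: "assocl X = spl X (\<lambda>a bc. spl bc (\<lambda>b c. tensor (tensor a b) c))"
proof -
  have "assocl X = spl X (\<lambda>a bc. assocl (tensor a bc))"
    unfolding spl_def assocl_def by (simp add: case_prod_unfold tensor_def)
  thus ?thesis by (simp add: assocl_tensor_gen)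
qed

lemma midswap_tensor_gen: "midswap (tensor ab cd) = spl ab (\<lambda>a b. spl cd (\<lambda>c d. tensor (tensor a c) (tensor b d)))"
proof -
  have "midswap (tensor ab cd) = midswap (tensor (spl ab tensor) (spl cd tensor))" by simp
  also have "\<dots> = spl ab (\<lambda>a b. spl cd (\<lambda>c d. tensor (tensor a c) (tensor b d)))"
    apply (subst spl_push[where F = "\<lambda>z. tensor z _"], simp)
    apply (subst spl_push, simp)
    apply (rule spl_cong)
    apply (subst spl_push[where F = "\<lambda>z. tensor _ z"], simp)
    apply (subst spl_push, simp)
    apply simp
    done
  finally show ?thesis .
qed

lemma midswap_spl: "midswap X = spl X (\<lambda>ab cd. spl ab (\<lambda>a b. spl cd (\<lambda>c d. tensor (tensor a c) (tensor b d))))"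
proof -
  have "midswap X = spl X (\<lambda>ab cd. midswap (tensor ab cd))"
    unfolding spl_def midswap_def by (simp add: case_prod_unfold tensor_def)
  thus ?thesis by (simp add: midswap_tensor_gen)
qed

lemma tensor_spl1: "tensor (spl X K) w = spl X (\<lambda>a b. tensor (K a b) w)"
  by (rule spl_push) simp
lemma tensor_spl2: "tensor w (spl X K) = spl X (\<lambda>a b. tensor w (K a b))"
  by (rule spl_push) simp
lemma pm_scale_spl: "pm_scale c (spl X K) = spl X (\<lambda>a b. pm_scale c (K a b))"
  by (rule spl_push) simp

lemma lin_auto_inv:
  assumes "lin_auto f"
  shows "is_linear (inv f)" "f (inv f x) = x" "inv f (f x) = x" "lin_auto (inv f)"
proof -
  have b: "bij f" and l: "is_linear f" using assms by (auto simp: lin_auto_def)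
  have fi: "f (inv f y) = y" for y using b by (simp add: bij_is_surj surj_f_inv_f)
  have iff: "inv f (f y) = y" for y using b by (simp add: bij_is_inj inv_f_f)
  show "f (inv f x) = x" "inv f (f x) = x" using fi iff by auto
  show il: "is_linear (inv f)"
    unfolding is_linear_def
  proof (intro conjI allI)
    fix u v
    have "inv f (u + v) = inv f (f (inv f u) + f (inv f v))" by (simp add: fi)
    also have "\<dots> = inv f u + inv f v" by (simp add: linear_add[OF l, symmetric] iff)
    finally show "inv f (u + v) = inv f u + inv f v" .
  next
    fix c u
    have "inv f (pm_scale c u) = inv f (pm_scale c (f (inv f u)))" by (simp add: fi)
    also have "\<dots> = pm_scale c (inv f u)" by (simp add: linear_scale[OF l, symmetric] iff)
    finally show "inv f (pm_scale c u) = pm_scale c (inv f u)" .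
  qed
  show "lin_auto (inv f)" using il b by (simp add: lin_auto_def bij_imp_bij_inv)
qed


lemma tmap_tmap: "is_linear f \<Longrightarrow> is_linear g \<Longrightarrow> is_linear f' \<Longrightarrow> is_linear g' \<Longrightarrow>
  tmap f g (tmap f' g' X) = tmap (\<lambda>x. f (f' x)) (\<lambda>x. g (g' x)) X"
  by (simp add: tmap_spl[of f' g' X] tmap_spl[of "\<lambda>x. f (f' x)"] spl_push[where F = "tmap f g"])


lemma spl_cong_bv: "(\<And>p q. K (bv p) (bv q) = K' (bv p) (bv q)) \<Longrightarrow> spl X K = spl X K'"
  unfolding spl_def by (rule lin_cong) auto

lemma tensor_expand: "tensor X Y = spl X (\<lambda>a b. spl Y (\<lambda>c d. tensor (tensor a b) (tensor c d)))"
proof -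
  have 1: "spl Y (\<lambda>c d. tensor (tensor a b) (tensor c d)) = tensor (tensor a b) Y" for a b
    using tensor_spl2[of "tensor a b" Y tensor] by simp
  have 2: "spl X (\<lambda>a b. tensor (tensor a b) Y) = tensor X Y"
    using tensor_spl1[of X tensor Y] by simp
  show ?thesis by (simp only: 1 2)
qed


lemma linfun_add: "is_linfun f \<Longrightarrow> f (u + v) = f u + f v" by (simp add: is_linfun_def)
lemma linfun_scale: "is_linfun f \<Longrightarrow> f (pm_scale c u) = c * f u" by (simp add: is_linfun_def)
lemma linfun_zero: "is_linfun f \<Longrightarrow> f 0 = 0" using linfun_scale[of f 0 0] by simp
lemma linfun_sum: "is_linfun f \<Longrightarrow> f (sum g A) = (\<Sum>x\<in>A. f (g x))"
  by (induction A rule: infinite_finite_induct) (auto simp: linfun_add linfun_zero)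
lemma linfun_lin: "is_linfun f \<Longrightarrow> f (lin g v) = (\<Sum>x\<in>Poly_Mapping.keys v. Poly_Mapping.lookup v x * f (g x))"
  by (simp add: lin_def linfun_sum linfun_scale)
lemma linfun_ext: "is_linfun f \<Longrightarrow> is_linfun g \<Longrightarrow> (\<And>x. f (bv x) = g (bv x)) \<Longrightarrow> f v = g v"
  using linfun_lin[of f bv v] linfun_lin[of g bv v] by simp
lemma linfun_comp: "is_linfun f \<Longrightarrow> is_linear F \<Longrightarrow> is_linfun (\<lambda>x. f (F x))"
  by (simp add: is_linfun_def is_linear_def)
lemma linfun_mult: "is_linfun f \<Longrightarrow> is_linfun (\<lambda>x. f x * c)"
  by (simp add: is_linfun_def algebra_simps)
lemma linear_escale [simp]: "is_linfun e \<Longrightarrow> is_linear f \<Longrightarrow> is_linear (\<lambda>x. pm_scale (e (f x)) w)"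
  by (simp add: is_linfun_def is_linear_def pm_scale_add2)

lemma linear_escale0 [simp]: "is_linfun e \<Longrightarrow> is_linear (\<lambda>x. pm_scale (e x) w)"
  by (simp add: is_linfun_def is_linear_def pm_scale_add2)
lemma linfun_mult2: "is_linfun f \<Longrightarrow> is_linfun (\<lambda>x. c * f x)"
  by (simp add: is_linfun_def algebra_simps)

definition sc :: "('a \<Rightarrow> 'k::field) \<Rightarrow> ('a \<Rightarrow>\<^sub>0 'k) \<Rightarrow> 'k" where
  "sc g v = (\<Sum>p\<in>Poly_Mapping.keys v. Poly_Mapping.lookup v p * g p)"

lemma sc_superset:
  assumes "finite S" "Poly_Mapping.keys v \<subseteq> S"
  shows "sc g v = (\<Sum>x\<in>S. Poly_Mapping.lookup v x * g x)"
  unfolding sc_def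
  by (rule sum.mono_neutral_left) (use assms in \<open>auto simp: in_keys_iff\<close>)

lemma sc_linfun: "is_linfun (sc g)"
  unfolding is_linfun_def
proof (intro conjI allI)
  fix u v :: "'a \<Rightarrow>\<^sub>0 'b"
  let ?S = "Poly_Mapping.keys u \<union> Poly_Mapping.keys v"
  have "sc g (u + v) = (\<Sum>x\<in>?S. Poly_Mapping.lookup (u+v) x * g x)"
    by (rule sc_superset) (use Poly_Mapping.keys_add[of u v] in auto)
  also have "\<dots> = (\<Sum>x\<in>?S. Poly_Mapping.lookup u x * g x) + (\<Sum>x\<in>?S. Poly_Mapping.lookup v x * g x)"
    by (simp add: lookup_add algebra_simps sum.distrib)
  also have "\<dots> = sc g u + sc g v"
    by (subst (1 2) sc_superset[of ?S]) auto
  finally show "sc g (u + v) = sc g u + sc g v" .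
next
  fix c and u :: "'a \<Rightarrow>\<^sub>0 'b"
  have "sc g (pm_scale c u) = (\<Sum>x\<in>Poly_Mapping.keys u. Poly_Mapping.lookup (pm_scale c u) x * g x)"
    by (rule sc_superset) (auto simp: in_keys_iff)
  thus "sc g (pm_scale c u) = c * sc g u" by (simp add: sc_def sum_distrib_left algebra_simps)
qed

lemma sc_bv [simp]: "sc g (bv x) = g x"
  by (simp add: sc_def bv_def)

lemma epsr_spl: "epsr e X = spl X (\<lambda>a b. pm_scale (e b) a)"
  by (simp add: epsr_def spl_def case_prod_unfold)
lemma epsl_spl: "epsl e X = spl X (\<lambda>a b. pm_scale (e a) b)"
  by (simp add: epsl_def spl_def case_prod_unfold)

lemma SEr: "is_linear K \<Longrightarrow> spl X (\<lambda>a b. pm_scale (e b) (K a)) = K (epsr e X)"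
  by (simp add: epsr_spl spl_push linear_scale)
lemma SEl: "is_linear K \<Longrightarrow> spl X (\<lambda>a b. pm_scale (e a) (K b)) = K (epsl e X)"
  by (simp add: epsl_spl spl_push linear_scale)

lemma SEr2: "is_linear K \<Longrightarrow> spl X (\<lambda>a b. pm_scale (e b * s) (K a)) = pm_scale s (K (epsr e X))"
proof -
  assume K: "is_linear K"
  have "spl X (\<lambda>a b. pm_scale (e b * s) (K a)) = spl X (\<lambda>a b. pm_scale s (pm_scale (e b) (K a)))"
    by (simp add: mult.commute)
  also have "\<dots> = pm_scale s (spl X (\<lambda>a b. pm_scale (e b) (K a)))" by (rule pm_scale_spl[symmetric])
  also have "\<dots> = pm_scale s (K (epsr e X))" by (simp only: SEr[OF K])
  finally show ?thesis .
qed
lemma SEl2: "is_linear K \<Longrightarrow> spl X (\<lambda>a b. pm_scale (s1 * (e a * s2)) (K b)) = pm_scale (s1 * s2) (K (epsl e X))"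
proof -
  assume K: "is_linear K"
  have "spl X (\<lambda>a b. pm_scale (s1 * (e a * s2)) (K b)) = spl X (\<lambda>a b. pm_scale (s1 * s2) (pm_scale (e a) (K b)))"
    by (simp add: algebra_simps)
  also have "\<dots> = pm_scale (s1 * s2) (spl X (\<lambda>a b. pm_scale (e a) (K b)))" by (rule pm_scale_spl[symmetric])
  also have "\<dots> = pm_scale (s1 * s2) (K (epsl e X))" by (simp only: SEl[OF K])
  finally show ?thesis .
qed
lemma SEl3: "is_linear K \<Longrightarrow> spl X (\<lambda>a b. pm_scale (s * e a) (K b)) = pm_scale s (K (epsl e X))"
proof -
  assume K: "is_linear K"
  have "spl X (\<lambda>a b. pm_scale (s * e a) (K b)) = spl X (\<lambda>a b. pm_scale s (pm_scale (e a) (K b)))"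
    by (simp add: algebra_simps)
  also have "\<dots> = pm_scale s (spl X (\<lambda>a b. pm_scale (e a) (K b)))" by (rule pm_scale_spl[symmetric])
  also have "\<dots> = pm_scale s (K (epsl e X))" by (simp only: SEl[OF K])
  finally show ?thesis .
qed

lemma scale_tensor1: "tensor (pm_scale c u) w = pm_scale c (tensor u w)"
  by (rule linear_scale[OF tensor_lin1])
lemma scale_tensor2: "tensor u (pm_scale c w) = pm_scale c (tensor u w)"
  by (rule linear_scale[OF tensor_lin2])




lemma id_lin [simp]: "is_linear id" by (simp add: is_linear_def)

locale sm =
  fixes muH :: "('h \<times> 'h \<Rightarrow>\<^sub>0 'k::field) \<Rightarrow> ('h \<Rightarrow>\<^sub>0 'k)"
    and uH :: "'h \<Rightarrow>\<^sub>0 'k"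
    and deltaH :: "('h \<Rightarrow>\<^sub>0 'k) \<Rightarrow> ('h \<times> 'h \<Rightarrow>\<^sub>0 'k)"
    and epsH :: "('h \<Rightarrow>\<^sub>0 'k) \<Rightarrow> 'k"
    and alpha :: "('h \<Rightarrow>\<^sub>0 'k) \<Rightarrow> ('h \<Rightarrow>\<^sub>0 'k)"
    and deltaA :: "('a \<Rightarrow>\<^sub>0 'k) \<Rightarrow> ('a \<times> 'a \<Rightarrow>\<^sub>0 'k)"
    and epsA :: "('a \<Rightarrow>\<^sub>0 'k) \<Rightarrow> 'k"
    and beta :: "('a \<Rightarrow>\<^sub>0 'k) \<Rightarrow> ('a \<Rightarrow>\<^sub>0 'k)"
    and rho :: "('a \<Rightarrow>\<^sub>0 'k) \<Rightarrow> ('h \<times> 'a \<Rightarrow>\<^sub>0 'k)"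
    and m :: int
  assumes HB: "hom_bialgebra muH uH deltaH epsH alpha"
    and AC: "hom_comodule_coalgebra muH uH deltaH epsH alpha deltaA epsA beta rho"
begin

abbreviation "ia \<equiv> inv alpha"
abbreviation "ib \<equiv> inv beta"
abbreviation "P \<equiv> hpow alpha m"

lemma HA: "hom_algebra muH uH alpha" using HB by (simp add: hom_bialgebra_def)
lemma HC: "hom_coalgebra deltaH epsH alpha" using HB by (simp add: hom_bialgebra_def)
lemma AA: "hom_coalgebra deltaA epsA beta" using AC by (simp add: hom_comodule_coalgebra_def)
lemma RC: "hom_comodule deltaH epsH alpha rho beta" using AC by (simp add: hom_comodule_coalgebra_def)

lemma mu_lin [simp]: "is_linear muH" using HA by (simp add: hom_algebra_def)
lemma al_auto: "lin_auto alpha" using HA by (simp add: hom_algebra_def)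
lemma mu_assoc: "muH (tensor (alpha a) (muH (tensor b c))) = muH (tensor (muH (tensor a b)) (alpha c))"
  using HA by (simp add: hom_algebra_def)
lemma al_mu: "alpha (muH (tensor a b)) = muH (tensor (alpha a) (alpha b))"
  using HA by (simp add: hom_algebra_def)
lemma mu_unit: "muH (tensor a uH) = alpha a" "muH (tensor uH a) = alpha a"
  using HA by (simp_all add: hom_algebra_def)
lemma al_u [simp]: "alpha uH = uH" using HA by (simp add: hom_algebra_def)

lemma dH_lin [simp]: "is_linear deltaH" using HC by (simp add: hom_coalgebra_def)
lemma epsH_lin: "is_linfun epsH" using HC by (simp add: hom_coalgebra_def)
lemma dH_coassoc: "tmap ia deltaH (deltaH c) = assocr (tmap deltaH ia (deltaH c))"
  using HC by (simp add: hom_coalgebra_def)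
lemma dH_al: "deltaH (alpha c) = tmap alpha alpha (deltaH c)" using HC by (simp add: hom_coalgebra_def)
lemma dH_counit: "epsr epsH (deltaH c) = ia c" "epsl epsH (deltaH c) = ia c"
  using HC by (simp_all add: hom_coalgebra_def)
lemma epsH_al [simp]: "epsH (alpha c) = epsH c" using HC by (simp add: hom_coalgebra_def)
lemma dH_mu: "deltaH (muH (tensor g h)) = tmap muH muH (midswap (tensor (deltaH g) (deltaH h)))"
  using HB by (simp add: hom_bialgebra_def)
lemma dH_u: "deltaH uH = tensor uH uH" using HB by (simp add: hom_bialgebra_def)
lemma epsH_mu: "epsH (muH (tensor g h)) = epsH g * epsH h" using HB by (simp add: hom_bialgebra_def)
lemma epsH_u [simp]: "epsH uH = 1" using HB by (simp add: hom_bialgebra_def)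

lemma dA_lin [simp]: "is_linear deltaA" using AA by (simp add: hom_coalgebra_def)
lemma epsA_lin: "is_linfun epsA" using AA by (simp add: hom_coalgebra_def)
lemma be_auto: "lin_auto beta" using AA by (simp add: hom_coalgebra_def)
lemma dA_coassoc: "tmap ib deltaA (deltaA c) = assocr (tmap deltaA ib (deltaA c))"
  using AA by (simp add: hom_coalgebra_def)
lemma dA_be: "deltaA (beta c) = tmap beta beta (deltaA c)" using AA by (simp add: hom_coalgebra_def)
lemma dA_counit: "epsr epsA (deltaA c) = ib c" "epsl epsA (deltaA c) = ib c"
  using AA by (simp_all add: hom_coalgebra_def)
lemma epsA_be [simp]: "epsA (beta c) = epsA c" using AA by (simp add: hom_coalgebra_def)

lemma rho_lin [simp]: "is_linear rho" using RC by (simp add: hom_comodule_def)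
lemma rho_coassoc: "tmap deltaH ib (rho x) = assocl (tmap ia rho (rho x))"
  using RC by (simp add: hom_comodule_def)
lemma rho_be: "rho (beta x) = tmap alpha beta (rho x)" using RC by (simp add: hom_comodule_def)
lemma rho_counit: "epsl epsH (rho x) = ib x" using RC by (simp add: hom_comodule_def)
lemma rho_dA: "tmap id deltaA (rho b) = tmap muH id (midswap (tmap rho rho (deltaA b)))"
  using AC by (simp add: hom_comodule_coalgebra_def)
lemma rho_epsA: "epsr epsA (rho b) = pm_scale (epsA b) uH"
  using AC by (simp add: hom_comodule_coalgebra_def)

lemma al_lin [simp]: "is_linear alpha" using al_auto by (simp add: lin_auto_def)
lemma be_lin [simp]: "is_linear beta" using be_auto by (simp add: lin_auto_def)
lemma ia_lin [simp]: "is_linear ia" using lin_auto_inv[OF al_auto] by simp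
lemma ib_lin [simp]: "is_linear ib" using lin_auto_inv[OF be_auto] by simp
lemma al_ia [simp]: "alpha (ia x) = x" "ia (alpha x) = x" using lin_auto_inv[OF al_auto] by simp_all
lemma be_ib [simp]: "beta (ib x) = x" "ib (beta x) = x" using lin_auto_inv[OF be_auto] by simp_all


definition goodH :: "(('h \<Rightarrow>\<^sub>0 'k) \<Rightarrow> ('h \<Rightarrow>\<^sub>0 'k)) \<Rightarrow> bool" where
  "goodH f \<longleftrightarrow> is_linear f \<and> (\<forall>x. f (alpha x) = alpha (f x)) \<and> (\<forall>x y. f (muH (tensor x y)) = muH (tensor (f x) (f y)))
     \<and> (\<forall>x. deltaH (f x) = tmap f f (deltaH x)) \<and> (\<forall>x. epsH (f x) = epsH x) \<and> f uH = uH"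

lemma goodH_al: "goodH alpha"
  by (simp add: goodH_def al_mu dH_al)

lemma goodH_id: "goodH (\<lambda>x. x)"
  by (simp add: goodH_def)

lemma goodH_ia: "goodH ia"
proof -
  have 1: "ia (muH (tensor x y)) = muH (tensor (ia x) (ia y))" for x y
    by (metis al_ia al_mu)
  have 2: "deltaH (ia x) = tmap ia ia (deltaH x)" for x
  proof -
    have "tmap ia ia (deltaH x) = tmap ia ia (deltaH (alpha (ia x)))" by simp
    also have "\<dots> = deltaH (ia x)" by (subst dH_al) (simp add: tmap_tmap)
    finally show ?thesis by simp
  qed
  have 3: "epsH (ia x) = epsH x" for x by (metis al_ia epsH_al)
  have 4: "ia uH = uH" by (metis al_ia al_u)
  show ?thesis by (simp add: goodH_def 1 2 3 4)
qed

lemma goodH_comp: "goodH f \<Longrightarrow> goodH g \<Longrightarrow> goodH (\<lambda>x. f (g x))"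
  unfolding goodH_def by (auto simp: tmap_tmap linear_comp)

lemma goodH_pow: "goodH f \<Longrightarrow> goodH (f ^^ n)"
proof (induction n)
  case 0 thus ?case using goodH_id by (simp add: id_def)
next
  case (Suc n) thus ?case using goodH_comp[of f "f ^^ n"] by (simp add: comp_def)
qed

lemma goodH_P: "goodH P"
  unfolding hpow_def using goodH_pow[OF goodH_al] goodH_pow[OF goodH_ia] by simp

lemma P_lin [simp]: "is_linear P" using goodH_P by (simp add: goodH_def)
lemma P_al: "P (alpha x) = alpha (P x)" using goodH_P by (simp add: goodH_def)
lemma P_ia: "P (ia x) = ia (P x)" by (metis P_al al_ia)
lemma P_mu: "P (muH (tensor x y)) = muH (tensor (P x) (P y))" using goodH_P by (simp add: goodH_def)
lemma dH_P: "deltaH (P x) = tmap P P (deltaH x)" using goodH_P by (simp add: goodH_def)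
lemma epsH_P [simp]: "epsH (P x) = epsH x" using goodH_P by (simp add: goodH_def)
lemma P_u [simp]: "P uH = uH" using goodH_P by (simp add: goodH_def)
lemma dH_ia: "deltaH (ia x) = tmap ia ia (deltaH x)" using goodH_ia by (simp add: goodH_def)
lemma ia_mu: "ia (muH (tensor x y)) = muH (tensor (ia x) (ia y))" using goodH_ia by (simp add: goodH_def)
lemma epsH_ia [simp]: "epsH (ia x) = epsH x" using goodH_ia by (simp add: goodH_def)
lemma ia_u [simp]: "ia uH = uH" using goodH_ia by (simp add: goodH_def)

lemma dA_ib: "deltaA (ib x) = tmap ib ib (deltaA x)"
proof -
  have "tmap ib ib (deltaA x) = tmap ib ib (deltaA (beta (ib x)))" by simp
  also have "\<dots> = deltaA (ib x)" by (subst dA_be) (simp add: tmap_tmap)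
  finally show ?thesis by simp
qed
lemma rho_ib: "rho (ib x) = tmap ia ib (rho x)"
proof -
  have "tmap ia ib (rho x) = tmap ia ib (rho (beta (ib x)))" by simp
  also have "\<dots> = rho (ib x)" by (subst rho_be) (simp add: tmap_tmap)
  finally show ?thesis by simp
qed
lemma epsA_ib [simp]: "epsA (ib x) = epsA x" by (metis be_ib epsA_be)


abbreviation "D \<equiv> smash_comult muH deltaH alpha deltaA beta rho m"

definition R :: "('a \<Rightarrow>\<^sub>0 'k) \<Rightarrow> ('h \<Rightarrow>\<^sub>0 'k) \<Rightarrow> (('a \<times> 'h) \<times> ('a \<times> 'h) \<Rightarrow>\<^sub>0 'k)" where
  "R u w = spl (deltaA u) (\<lambda>a1 a2. spl (deltaH w) (\<lambda>h1 h2. spl (rho a2) (\<lambda>c a0.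
      tensor (tensor a1 (muH (tensor (P c) (ia h1)))) (tensor (beta a0) h2))))"

lemma D_lin [simp]: "is_linear D" by (simp add: smash_comult_def)

lemma D_bv: "D (bv (x, y)) = R (bv x) (bv y)"
proof -
  define L :: "(('a \<times> 'h \<times> 'a) \<times> 'h \<times> 'h \<Rightarrow>\<^sub>0 'k) \<Rightarrow> _" where
    "L = lin (\<lambda>((a1, (c, a0)), (h1, h2)). bv ((a1, (c, h1)), (a0, h2)))"
  define T :: "(('a \<times> 'h \<times> 'h) \<times> 'a \<times> 'h \<Rightarrow>\<^sub>0 'k) \<Rightarrow> (('a \<times> 'h) \<times> 'a \<times> 'h \<Rightarrow>\<^sub>0 'k)"
    where "T = tmap (tmap id (\<lambda>v. muH (tmap P ia v))) (tmap beta id)"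
  have TL: "is_linear T" "is_linear L" by (simp_all add: T_def L_def)
  have "D (bv (x, y)) = T (L (tmap (tmap id rho) id (tensor (deltaA (bv x)) (deltaH (bv y)))))"
    by (simp add: smash_comult_def T_def L_def)
  also have "\<dots> = spl (deltaA (bv x)) (\<lambda>a b. spl (deltaH (bv y)) (\<lambda>c d.
      T (L (tmap (tmap id rho) id (tensor (tensor a b) (tensor c d))))))"
    by (subst tensor_expand) (simp add: spl_push[of T] spl_push[of L] spl_push[of "tmap _ _"] TL)
  also have "\<dots> = R (bv x) (bv y)"
    unfolding R_def
  proof (intro spl_cong_bv)
    fix p q :: 'a and p' q' :: 'h
    have "T (L (tmap (tmap id rho) id (tensor (tensor (bv p) (bv q)) (tensor (bv p') (bv q'))))) =
      T (L (tensor (tensor (bv p) (spl (rho (bv q)) tensor)) (bv (p', q'))))"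
      by simp
    also have "\<dots> = spl (rho (bv q)) (\<lambda>c a0. T (L (tensor (tensor (bv p) (tensor c a0)) (bv (p', q')))))"
      by (simp only: tensor_spl1 tensor_spl2 spl_push[of T] spl_push[of L] TL)
    also have "\<dots> = spl (rho (bv q)) (\<lambda>c a0. tensor (tensor (bv p) (muH (tensor (P c) (ia (bv p'))))) (tensor (beta a0) (bv q')))"
      by (rule spl_cong_bv) (simp add: T_def L_def)
    finally show "T (L (tmap (tmap id rho) id (tensor (tensor (bv p) (bv q)) (tensor (bv p') (bv q'))))) =
      spl (rho (bv q)) (\<lambda>c a0. tensor (tensor (bv p) (muH (tensor (P c) (ia (bv p'))))) (tensor (beta a0) (bv q')))" .
  qed
  finally show ?thesis .
qed


lemma lin_maps [simp]:
  "is_linear f1 \<Longrightarrow> is_linear (\<lambda>x. deltaA (f1 x))"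
  "is_linear f2 \<Longrightarrow> is_linear (\<lambda>x. deltaH (f2 x))"
  "is_linear f3 \<Longrightarrow> is_linear (\<lambda>x. rho (f3 x))"
  "is_linear f4 \<Longrightarrow> is_linear (\<lambda>x. muH (f4 x))"
  "is_linear f5 \<Longrightarrow> is_linear (\<lambda>x. alpha (f5 x))"
  "is_linear f6 \<Longrightarrow> is_linear (\<lambda>x. beta (f6 x))"
  "is_linear f7 \<Longrightarrow> is_linear (\<lambda>x. ia (f7 x))"
  "is_linear f8 \<Longrightarrow> is_linear (\<lambda>x. ib (f8 x))"
  "is_linear f9 \<Longrightarrow> is_linear (\<lambda>x. P (f9 x))"
  "is_linear f10 \<Longrightarrow> is_linear (\<lambda>x. D (f10 x))"
  "is_linear f11 \<Longrightarrow> is_linear (\<lambda>x. assocr (f11 x))"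
  "is_linear f12 \<Longrightarrow> is_linear (\<lambda>x. assocl (f12 x))"
  "is_linear f13 \<Longrightarrow> is_linear (\<lambda>x. midswap (f13 x))"
  by (simp_all add: linear_comp)

lemma push_maps:
  "deltaA (spl X1 K1) = spl X1 (\<lambda>a b. deltaA (K1 a b))"
  "deltaH (spl X2 K2) = spl X2 (\<lambda>a b. deltaH (K2 a b))"
  "rho (spl X3 K3) = spl X3 (\<lambda>a b. rho (K3 a b))"
  "muH (spl X4 K4) = spl X4 (\<lambda>a b. muH (K4 a b))"
  "alpha (spl X5 K5) = spl X5 (\<lambda>a b. alpha (K5 a b))"
  "beta (spl X6 K6) = spl X6 (\<lambda>a b. beta (K6 a b))"
  "ia (spl X7 K7) = spl X7 (\<lambda>a b. ia (K7 a b))"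
  "ib (spl X8 K8) = spl X8 (\<lambda>a b. ib (K8 a b))"
  "P (spl X9 K9) = spl X9 (\<lambda>a b. P (K9 a b))"
  "D (spl X10 K10) = spl X10 (\<lambda>a b. D (K10 a b))"
  by (simp_all add: spl_push)

lemma D_spl: "D v = spl v R"
proof -
  have "D v = lin (\<lambda>p. D (bv p)) v" by (rule linear_expand) simp
  also have "\<dots> = spl v R" unfolding spl_def by (rule lin_cong) (auto simp: D_bv)
  finally show ?thesis .
qed

lemma D_tensor [simp]: "D (tensor u w) = R u w"
  by (simp add: D_spl R_def)

lemma inv_gamma: "inv (tmap beta alpha) = tmap ib ia"
  by (rule inv_equality) (simp_all add: tmap_tmap)

lemmas nf = spl_spl tensor_spl1 tensor_spl2 tmap_spl assocr_spl assocl_spl midswap_spl push_maps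
  dA_be dA_ib rho_be rho_ib dH_al dH_ia dH_P dH_mu

lemma CC:
  assumes l1: "\<And>b1 b2. is_linear (\<lambda>x. T x b1 b2)" and l2: "\<And>c b2. is_linear (\<lambda>x. T c x b2)" and l3: "\<And>c b1. is_linear (\<lambda>x. T c b1 x)"
  shows "spl (rho x) (\<lambda>c a0. spl (deltaA a0) (\<lambda>b1 b2. T c b1 b2)) =
    spl (deltaA x) (\<lambda>e1 e2. spl (rho e1) (\<lambda>c1 f1. spl (rho e2) (\<lambda>c2 f2. T (muH (tensor c1 c2)) f1 f2)))"
proof -
  let ?G = "\<lambda>Z. spl Z (\<lambda>c bb. spl bb (\<lambda>b1 b2. T c b1 b2))"
  have "?G (tmap id deltaA (rho x)) = ?G (tmap muH id (midswap (tmap rho rho (deltaA x))))"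
    by (simp only: rho_dA)
  thus ?thesis by (simp add: nf l1 l2 l3)
qed

lemma RCo:
  assumes l1: "\<And>b1 b2. is_linear (\<lambda>x. T x b1 b2)" and l2: "\<And>c b2. is_linear (\<lambda>x. T c x b2)" and l3: "\<And>c b1. is_linear (\<lambda>x. T c b1 x)"
  shows "spl (rho x) (\<lambda>c f. spl (rho f) (\<lambda>d b. T c d b)) =
    spl (rho x) (\<lambda>c f. spl (deltaH c) (\<lambda>p q. T (alpha p) q (ib f)))"
proof -
  let ?G = "\<lambda>Z. spl Z (\<lambda>pq f. spl pq (\<lambda>p q. T (alpha p) q f))"
  have "?G (tmap deltaH ib (rho x)) = ?G (assocl (tmap ia rho (rho x)))"
    by (simp only: rho_coassoc)
  moreover have "is_linear (\<lambda>x. T (alpha x) b1 b2)" for b1 b2 using linear_comp[OF l1 al_lin] .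
  ultimately show ?thesis by (simp add: nf l1 l2 l3)
qed

lemma ACo:
  assumes l1: "\<And>b1 b2. is_linear (\<lambda>x. T x b1 b2)" and l2: "\<And>c b2. is_linear (\<lambda>x. T c x b2)" and l3: "\<And>c b1. is_linear (\<lambda>x. T c b1 x)"
  shows "spl (deltaA u) (\<lambda>a1 a2. spl (deltaA a2) (\<lambda>b1 b2. T a1 b1 b2)) =
    spl (deltaA u) (\<lambda>a1 a2. spl (deltaA a1) (\<lambda>b1 b2. T (beta b1) b2 (ib a2)))"
proof -
  let ?G = "\<lambda>Z. spl Z (\<lambda>a bc. spl bc (\<lambda>b c. T (beta a) b c))"
  have "?G (tmap ib deltaA (deltaA u)) = ?G (assocr (tmap deltaA ib (deltaA u)))"
    by (simp only: dA_coassoc)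
  moreover have "is_linear (\<lambda>x. T (beta x) b1 b2)" for b1 b2 using linear_comp[OF l1 be_lin] .
  ultimately show ?thesis by (simp add: nf l1 l2 l3)
qed

lemma HCo:
  assumes l1: "\<And>b1 b2. is_linear (\<lambda>x. T x b1 b2)" and l2: "\<And>c b2. is_linear (\<lambda>x. T c x b2)" and l3: "\<And>c b1. is_linear (\<lambda>x. T c b1 x)"
  shows "spl (deltaH u) (\<lambda>a1 a2. spl (deltaH a2) (\<lambda>b1 b2. T a1 b1 b2)) =
    spl (deltaH u) (\<lambda>a1 a2. spl (deltaH a1) (\<lambda>b1 b2. T (alpha b1) b2 (ia a2)))"
proof -
  let ?G = "\<lambda>Z. spl Z (\<lambda>a bc. spl bc (\<lambda>b c. T (alpha a) b c))"
  have "?G (tmap ia deltaH (deltaH u)) = ?G (assocr (tmap deltaH ia (deltaH u)))"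
    by (simp only: dH_coassoc)
  moreover have "is_linear (\<lambda>x. T (alpha x) b1 b2)" for b1 b2 using linear_comp[OF l1 al_lin] .
  ultimately show ?thesis by (simp add: nf l1 l2 l3)
qed

lemma comm_dH: "spl X (\<lambda>a b. spl (deltaH y) (\<lambda>c d. K a b c d)) = spl (deltaH y) (\<lambda>c d. spl X (\<lambda>a b. K a b c d))"
  by (rule spl_comm)
lemma comm_dA: "spl X (\<lambda>a b. spl (deltaA y) (\<lambda>c d. K a b c d)) = spl (deltaA y) (\<lambda>c d. spl X (\<lambda>a b. K a b c d))"
  by (rule spl_comm)
lemma comm_rho: "spl X (\<lambda>a b. spl (rho y) (\<lambda>c d. K a b c d)) = spl (rho y) (\<lambda>c d. spl X (\<lambda>a b. K a b c d))"
  by (rule spl_comm)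

definition LNF :: "('a \<Rightarrow>\<^sub>0 'k) \<Rightarrow> ('h \<Rightarrow>\<^sub>0 'k) \<Rightarrow> _" where
  "LNF u w = spl (deltaH w) (\<lambda>h1 h2. spl (deltaH h1) (\<lambda>k1 k2. spl (deltaA u) (\<lambda>x1 x2.
     spl (deltaA x1) (\<lambda>e1 e2. spl (rho e2) (\<lambda>c1 f1. spl (rho x2) (\<lambda>c2 f2. spl (deltaH c2) (\<lambda>p q.
     tensor (tensor e1 (ia (muH (tensor (P (muH (tensor c1 p))) k1))))
       (tensor (tensor (beta f1) (muH (tensor (P q) (ia k2)))) (tensor f2 (ia h2))))))))))"

definition RNF :: "('a \<Rightarrow>\<^sub>0 'k) \<Rightarrow> ('h \<Rightarrow>\<^sub>0 'k) \<Rightarrow> _" where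
  "RNF u w = spl (deltaA u) (\<lambda>y a2. spl (deltaH w) (\<lambda>h1 h2. spl (rho a2) (\<lambda>c a0.
     spl (deltaA y) (\<lambda>y1 y2. spl (deltaH h1) (\<lambda>r s. spl (deltaH c) (\<lambda>p q. spl (rho y2) (\<lambda>c1 f1.
     tensor (tensor y1 (muH (tensor (P c1) (ia (muH (tensor (P p) (ia r)))))))
       (tensor (tensor (beta f1) (muH (tensor (P q) (ia s)))) (tensor a0 (ia h2))))))))))"

lemma LHS_nf: "tmap (inv (tmap beta alpha)) D (D (tensor u w)) = LNF u w"
  unfolding LNF_def
  apply (simp add: inv_gamma R_def nf)
  apply (simp add: CC)
  apply (simp only: comm_dH)
  apply (simp add: RCo nf)
  apply (simp add: ACo nf)
  apply (simp add: HCo nf)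
  done

lemma RHS_nf: "assocr (tmap D (inv (tmap beta alpha)) (D (tensor u w))) = RNF u w"
  unfolding RNF_def by (simp add: inv_gamma R_def nf)

lemma leaf_eq: "ia (muH (tensor (P (muH (tensor c1 p))) k1)) = muH (tensor (P c1) (ia (muH (tensor (P p) (ia k1)))))"
proof -
  have "muH (tensor (P c1) (ia (muH (tensor (P p) (ia k1))))) =
    muH (tensor (alpha (ia (P c1))) (muH (tensor (ia (P p)) (ia (ia k1)))))"
    by (simp add: ia_mu)
  also have "\<dots> = muH (tensor (muH (tensor (ia (P c1)) (ia (P p)))) (alpha (ia (ia k1))))"
    by (rule mu_assoc)
  also have "\<dots> = ia (muH (tensor (P (muH (tensor c1 p))) k1))"
    by (simp add: ia_mu P_mu)
  finally show ?thesis by simp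
qed

lemma LNF_RNF: "LNF u w = RNF u w"
  unfolding LNF_def RNF_def
  apply (simp only: comm_dH[where y = w])
  apply (rule spl_cong)
  subgoal for h1 h2
    apply (simp only: comm_dH[where y = h1])
    apply (rule spl_cong)
    subgoal for k1 k2
      apply (rule spl_cong)
      subgoal for x1 x2
        apply (simp only: comm_dA[where y = x1])
        apply (rule spl_cong)
        subgoal for e1 e2
          apply (simp only: comm_rho[where y = e2])
          apply (rule spl_cong)+
          apply (simp add: leaf_eq)
          done
        done
      done
    done
  done

lemma D_coassoc: "tmap (inv (tmap beta alpha)) D (D c) = assocr (tmap D (inv (tmap beta alpha)) (D c))"
proof -
  have eq: "tmap (inv (tmap beta alpha)) D (D (tensor u w)) = assocr (tmap D (inv (tmap beta alpha)) (D (tensor u w)))" for u w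
    by (simp only: LHS_nf RHS_nf LNF_RNF)
  have "(\<lambda>c. tmap (inv (tmap beta alpha)) D (D c)) c = (\<lambda>c. assocr (tmap D (inv (tmap beta alpha)) (D c))) c"
    by (rule tensor_ext[where F = "\<lambda>c. tmap (inv (tmap beta alpha)) D (D c)" and G = "\<lambda>c. assocr (tmap D (inv (tmap beta alpha)) (D c))"]) (use eq in \<open>simp_all add: inv_gamma\<close>)
  thus ?thesis by simp
qed

abbreviation "E \<equiv> smash_counit epsH epsA"

lemma E_sc: "E = sc (\<lambda>p. epsA (bv (fst p)) * epsH (bv (snd p)))"
  by (simp add: fun_eq_iff smash_counit_def sc_def)

lemma E_lin [simp]: "is_linfun E" by (simp add: E_sc sc_linfun)

lemma E_tensor [simp]: "E (tensor u w) = epsA u * epsH w"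
proof -
  have 1: "E (tensor (bv x) w) = epsA (bv x) * epsH w" for x
  proof -
    have "(\<lambda>w. E (tensor (bv x) w)) w = (\<lambda>w. epsA (bv x) * epsH w) w"
    proof (rule linfun_ext)
      show "is_linfun (\<lambda>w. E (tensor (bv x) w))" by (rule linfun_comp[OF E_lin tensor_lin2])
      show "is_linfun (\<lambda>w. epsA (bv x) * epsH w)" by (rule linfun_mult2[OF epsH_lin])
      fix y show "E (tensor (bv x) (bv y)) = epsA (bv x) * epsH (bv y)"
        by (simp only: tensor_bv E_sc sc_bv) simp
    qed
    thus ?thesis by simp
  qed
  have "(\<lambda>u. E (tensor u w)) u = (\<lambda>u. epsA u * epsH w) u"
    by (rule linfun_ext[OF linfun_comp[OF E_lin tensor_lin1] linfun_mult[OF epsA_lin]]) (simp only: 1)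
  thus ?thesis by simp
qed

lemma epsA_lin' [simp]: "is_linfun epsA" by (rule epsA_lin)
lemma epsH_lin' [simp]: "is_linfun epsH" by (rule epsH_lin)

lemma scale_maps:
  "deltaA (pm_scale c1 x1) = pm_scale c1 (deltaA x1)"
  "deltaH (pm_scale c2 x2) = pm_scale c2 (deltaH x2)"
  "rho (pm_scale c3 x3) = pm_scale c3 (rho x3)"
  "muH (pm_scale c4 x4) = pm_scale c4 (muH x4)"
  "alpha (pm_scale c5 x5) = pm_scale c5 (alpha x5)"
  "beta (pm_scale c6 x6) = pm_scale c6 (beta x6)"
  "ia (pm_scale c7 x7) = pm_scale c7 (ia x7)"
  "ib (pm_scale c8 x8) = pm_scale c8 (ib x8)"
  "P (pm_scale c9 x9) = pm_scale c9 (P x9)"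
  "epsA (pm_scale c10 x10) = c10 * epsA x10"
  "epsH (pm_scale c11 x11) = c11 * epsH x11"
  by (simp_all add: linear_scale linfun_scale)

lemma epsr_lin [simp]: "is_linear (epsr e)" by (simp add: epsr_def)
lemma epsl_lin [simp]: "is_linear (epsl e)" by (simp add: epsl_def)
lemma epsr_lin' [simp]: "is_linear f \<Longrightarrow> is_linear (\<lambda>x. epsr e (f x))" by (rule linear_comp[OF epsr_lin])
lemma epsl_lin' [simp]: "is_linear f \<Longrightarrow> is_linear (\<lambda>x. epsl e (f x))" by (rule linear_comp[OF epsl_lin])

lemma counit_r: "epsr E (D c) = inv (tmap beta alpha) c"
proof -
  have eq: "epsr E (D (tensor u w)) = tmap ib ia (tensor u w)" for u w
    apply (simp add: epsr_spl R_def nf epsH_mu)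
    apply (simp add: SEr2[where e = epsA] rho_epsA scale_maps scale_tensor1 scale_tensor2 mu_unit)
    apply (simp add: SEr2[where e = epsH] SEr[where e = epsA] dH_counit dA_counit)
    done
  have "(\<lambda>c. epsr E (D c)) c = (\<lambda>c. tmap ib ia c) c"
    by (rule tensor_ext[where F = "\<lambda>c. epsr E (D c)" and G = "\<lambda>c. tmap ib ia c"]) (use eq in simp_all)
  thus ?thesis by (simp add: inv_gamma)
qed

lemma counit_l: "epsl E (D c) = inv (tmap beta alpha) c"
proof -
  have eq: "epsl E (D (tensor u w)) = tmap ib ia (tensor u w)" for u w
    apply (simp add: epsl_spl R_def nf epsH_mu)
    apply (simp add: SEl2[where e = epsH] rho_counit scale_maps scale_tensor1 scale_tensor2)
    apply (simp add: SEl3[where e = epsH] SEl[where e = epsA] dH_counit dA_counit)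
    done
  have "(\<lambda>c. epsl E (D c)) c = (\<lambda>c. tmap ib ia c) c"
    by (rule tensor_ext[where F = "\<lambda>c. epsl E (D c)" and G = "\<lambda>c. tmap ib ia c"]) (use eq in simp_all)
  thus ?thesis by (simp add: inv_gamma)
qed

lemma D_gamma: "D (tmap beta alpha c) = tmap (tmap beta alpha) (tmap beta alpha) (D c)"
proof -
  have eq: "D (tmap beta alpha (tensor u w)) = tmap (tmap beta alpha) (tmap beta alpha) (D (tensor u w))" for u w
    by (simp add: R_def nf al_mu P_al)
  have "(\<lambda>c. D (tmap beta alpha c)) c = (\<lambda>c. tmap (tmap beta alpha) (tmap beta alpha) (D c)) c"
    by (rule tensor_ext[where F = "\<lambda>c. D (tmap beta alpha c)" and G = "\<lambda>c. tmap (tmap beta alpha) (tmap beta alpha) (D c)"]) (use eq in simp_all)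
  thus ?thesis by simp
qed

lemma E_gamma: "E (tmap beta alpha c) = E c"
proof -
  have "(\<lambda>c. E (tmap beta alpha c)) c = E c"
  proof (rule linfun_ext)
    show "is_linfun (\<lambda>c. E (tmap beta alpha c))" by (rule linfun_comp[OF E_lin tmap_lin])
    show "is_linfun E" by simp
    fix x :: "'a \<times> 'h"
    obtain p q where x: "x = (p, q)" by (cases x)
    show "E (tmap beta alpha (bv x)) = E (bv x)"
      unfolding x by (simp only: tmap_bv E_tensor epsA_be epsH_al) (simp only: tensor_bv[symmetric] E_tensor)
  qed
  thus ?thesis by simp
qed

lemma gamma_auto: "lin_auto (tmap beta alpha)"
  unfolding lin_auto_def
proof
  show "is_linear (tmap beta alpha)" by simp
  show "bij (tmap beta alpha)"
    by (rule o_bij[where g = "tmap ib ia"]) (simp_all add: fun_eq_iff tmap_tmap)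
qed

theorem main: "hom_coalgebra D E (tmap beta alpha)"
  unfolding hom_coalgebra_def
  using gamma_auto D_coassoc D_gamma counit_r counit_l E_gamma by simp

end

theorem proposition3p1:
  fixes muH :: "('h \<times> 'h \<Rightarrow>\<^sub>0 'k::field) \<Rightarrow> ('h \<Rightarrow>\<^sub>0 'k)"
    and uH :: "'h \<Rightarrow>\<^sub>0 'k"
    and deltaH :: "('h \<Rightarrow>\<^sub>0 'k) \<Rightarrow> ('h \<times> 'h \<Rightarrow>\<^sub>0 'k)"
    and epsH :: "('h \<Rightarrow>\<^sub>0 'k) \<Rightarrow> 'k"
    and alpha :: "('h \<Rightarrow>\<^sub>0 'k) \<Rightarrow> ('h \<Rightarrow>\<^sub>0 'k)"
    and deltaA :: "('a \<Rightarrow>\<^sub>0 'k) \<Rightarrow> ('a \<times> 'a \<Rightarrow>\<^sub>0 'k)"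
    and epsA :: "('a \<Rightarrow>\<^sub>0 'k) \<Rightarrow> 'k"
    and beta :: "('a \<Rightarrow>\<^sub>0 'k) \<Rightarrow> ('a \<Rightarrow>\<^sub>0 'k)"
    and rho :: "('a \<Rightarrow>\<^sub>0 'k) \<Rightarrow> ('h \<times> 'a \<Rightarrow>\<^sub>0 'k)"
    and m :: int
  assumes "hom_bialgebra muH uH deltaH epsH alpha"
    and "hom_comodule_coalgebra muH uH deltaH epsH alpha deltaA epsA beta rho"
  shows "hom_coalgebra (smash_comult muH deltaH alpha deltaA beta rho m)
           (smash_counit epsH epsA) (tmap beta alpha)"
  proof -
  interpret sm muH uH deltaH epsH alpha deltaA epsA beta rho m
    by unfold_locales (rule assms(1), rule assms(2))
  show ?thesis by (rule main)
qed

end
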